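(* For any formula $\phi$ of $\mathsf{BSML}$, if $\phi$ has the empty state property (i.e., $M,\emptyset\models\phi$ for every model $M$), then $\phi$ is downward closed (i.e., $M,s\models\phi$ and $t\subseteq s$ imply $M,t\models\phi$).
   Context: Formulas of $\mathsf{BSML}$: $\phi ::= p \mid \neg\phi \mid (\phi\wedge\phi) \mid (\phi\vee\phi) \mid \Diamond\phi \mid \mathrm{NE}$. Models $M=(W,R,V)$ are Kripke models; states are subsets $s\subseteq W$; $R[w]=\{v:wRv\}$. Support/anti-support: $s\models p$ iff $s\subseteq V(p)$; $s\dashv p$ iff $s\cap V(p)=\emptyset$; $s\models\mathrm{NE}$ iff $s\ne\emptyset$; $s\dashv\mathrm{NE}$ iff $s=\emptyset$; $s\models\neg\phi$ iff $s\dashv\phi$; $s\dashv\neg\phi$ iff $s\models\phi$; $s\models\phi\wedge\psi$ iff both; $s\dashv\phi\wedge\psi$ iff $s=t\cup u$ with $t\dashv\phi$, $u\dashv\psi$; $s\models\phi\vee\psi$ iff $s=t\cup u$ with $t\models\phi$, $u\models\psi$; $s\dashv\phi\vee\psi$ iff $s\dashv\phi$ and $s\dashv\psi$; $s\models\Diamond\phi$ iff each $w\in s$ has a nonempty $t\subseteq R[w]$ with $t\models\phi$; $s\dashv\Diamond\phi$ iff $R[w]\dashv\phi$ for all $w\in s$. *)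

theory Defs
  imports Main
begin

datatype 'p bsml = Prop 'p | Neg "'p bsml" | Conj "'p bsml" "'p bsml"
  | Disj "'p bsml" "'p bsml" | Dia "'p bsml" | NE

record ('w, 'p) kmodel =
  W :: "'w set"
  R :: "'w \<Rightarrow> 'w \<Rightarrow> bool"
  V :: "'p \<Rightarrow> 'w set"

definition is_model :: "('w, 'p) kmodel \<Rightarrow> bool" where
  "is_model M \<longleftrightarrow> W M \<noteq> {} \<and> (\<forall>w v. R M w v \<longrightarrow> w \<in> W M \<and> v \<in> W M)
     \<and> (\<forall>p. V M p \<subseteq> W M)"

definition succs :: "('w, 'p) kmodel \<Rightarrow> 'w \<Rightarrow> 'w set" where
  "succs M w = {v. R M w v}"

fun supp :: "('w, 'p) kmodel \<Rightarrow> 'w set \<Rightarrow> 'p bsml \<Rightarrow> bool"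
and anti :: "('w, 'p) kmodel \<Rightarrow> 'w set \<Rightarrow> 'p bsml \<Rightarrow> bool" where
  "supp M s (Prop p) \<longleftrightarrow> s \<subseteq> V M p"
| "supp M s NE \<longleftrightarrow> s \<noteq> {}"
| "supp M s (Neg \<phi>) \<longleftrightarrow> anti M s \<phi>"
| "supp M s (Conj \<phi> \<psi>) \<longleftrightarrow> supp M s \<phi> \<and> supp M s \<psi>"
| "supp M s (Disj \<phi> \<psi>) \<longleftrightarrow> (\<exists>t u. s = t \<union> u \<and> supp M t \<phi> \<and> supp M u \<psi>)"
| "supp M s (Dia \<phi>) \<longleftrightarrow> (\<forall>w\<in>s. \<exists>t. t \<noteq> {} \<and> t \<subseteq> succs M w \<and> supp M t \<phi>)"
| "anti M s (Prop p) \<longleftrightarrow> s \<inter> V M p = {}"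
| "anti M s NE \<longleftrightarrow> s = {}"
| "anti M s (Neg \<phi>) \<longleftrightarrow> supp M s \<phi>"
| "anti M s (Conj \<phi> \<psi>) \<longleftrightarrow> (\<exists>t u. s = t \<union> u \<and> anti M t \<phi> \<and> anti M u \<psi>)"
| "anti M s (Disj \<phi> \<psi>) \<longleftrightarrow> anti M s \<phi> \<and> anti M s \<psi>"
| "anti M s (Dia \<phi>) \<longleftrightarrow> (\<forall>w\<in>s. anti M (succs M w) \<phi>)"

definition empty_state_property :: "'p bsml \<Rightarrow> ('w, 'p) kmodel itself \<Rightarrow> bool" where
  "empty_state_property \<phi> _ \<longleftrightarrow> (\<forall>M :: ('w, 'p) kmodel. is_model M \<longrightarrow> supp M {} \<phi>)"

definition downward_closed :: "'p bsml \<Rightarrow> ('w, 'p) kmodel itself \<Rightarrow> bool" where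
  "downward_closed \<phi> _ \<longleftrightarrow> (\<forall>(M :: ('w, 'p) kmodel) s t. is_model M \<longrightarrow> s \<subseteq> W M \<longrightarrow>
      supp M s \<phi> \<longrightarrow> t \<subseteq> s \<longrightarrow> supp M t \<phi>)"

end

theory Submission
  imports Defs
begin

lemma dc_aux:
  "(supp M {} \<phi> \<longrightarrow> (\<forall>s t. supp M s \<phi> \<longrightarrow> t \<subseteq> s \<longrightarrow> supp M t \<phi>)) \<and>
   (anti M {} \<phi> \<longrightarrow> (\<forall>s t. anti M s \<phi> \<longrightarrow> t \<subseteq> s \<longrightarrow> anti M t \<phi>))"
proof (induction \<phi>)
  case (Prop p)
  then show ?case by auto
next
  case (Neg \<phi>)
  then show ?case by simp
next
  case (Conj \<phi>1 \<phi>2)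
  show ?case
  proof (intro conjI impI allI)
    fix s t assume "supp M {} (Conj \<phi>1 \<phi>2)" "supp M s (Conj \<phi>1 \<phi>2)" "t \<subseteq> s"
    then show "supp M t (Conj \<phi>1 \<phi>2)" using Conj by auto
  next
    fix s t assume e: "anti M {} (Conj \<phi>1 \<phi>2)" and a: "anti M s (Conj \<phi>1 \<phi>2)" and ts: "t \<subseteq> s"
    from e have e1: "anti M {} \<phi>1" and e2: "anti M {} \<phi>2" by auto
    from a obtain x y where "s = x \<union> y" "anti M x \<phi>1" "anti M y \<phi>2" by auto
    moreover have "t = (t \<inter> x) \<union> (t \<inter> y)" using ts \<open>s = x \<union> y\<close> by auto
    ultimately show "anti M t (Conj \<phi>1 \<phi>2)" using Conj e1 e2
      by (metis Int_lower2 anti.simps(4))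
  qed
next
  case (Disj \<phi>1 \<phi>2)
  show ?case
  proof (intro conjI impI allI)
    fix s t assume e: "supp M {} (Disj \<phi>1 \<phi>2)" and a: "supp M s (Disj \<phi>1 \<phi>2)" and ts: "t \<subseteq> s"
    from e have e1: "supp M {} \<phi>1" and e2: "supp M {} \<phi>2" by auto
    from a obtain x y where "s = x \<union> y" "supp M x \<phi>1" "supp M y \<phi>2" by auto
    moreover have "t = (t \<inter> x) \<union> (t \<inter> y)" using ts \<open>s = x \<union> y\<close> by auto
    ultimately show "supp M t (Disj \<phi>1 \<phi>2)" using Disj e1 e2
      by (metis Int_lower2 supp.simps(5))
  next
    fix s t assume "anti M {} (Disj \<phi>1 \<phi>2)" "anti M s (Disj \<phi>1 \<phi>2)" "t \<subseteq> s"
    then show "anti M t (Disj \<phi>1 \<phi>2)" using Disj by auto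
  qed
next
  case (Dia \<phi>)
  then show ?case by auto
next
  case NE
  then show ?case by auto
qed

theorem lemma3p18:
  fixes \<phi> :: "'p bsml"
  assumes "empty_state_property \<phi> TYPE(('w, 'p) kmodel)"
  shows "downward_closed \<phi> TYPE(('w, 'p) kmodel)"
  using assms dc_aux unfolding empty_state_property_def downward_closed_def by blast

end
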